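(* Let $A\in\mathbb{R}^{n\times n}$, $B\in\mathbb{R}^{n\times m}$, $C\in\mathbb{R}^{p\times n}$, $E\in\mathbb{R}^{n\times p}$, let $\Theta\subset\mathbb{R}^p$ be a convex compact set, let $w:[0,T]\to\mathbb{R}^m$ be integrable, and let $x(0)\in\mathbb{R}^n$ be fixed, where $T>0$. For $z_0\in\mathbb{R}^p$ let $x^{z_0}$ denote the solution on $[0,T]$ of $\dot{x}=Ax+Bw+Ez_0$ with initial value $x(0)$, and define the set of $T$-stationary initial conditions $$\mathfrak{R}(T):=\{z_0\in\mathbb{R}^p:\ z_0\in Cx^{z_0}(t)+\Theta\ \text{for all } t\in[0,T]\}.$$ Let $\Psi$ be the entire function $\Psi(u)=\int_0^1 e^{uv}\,dv$ (equal to $1$ at $u=0$ and $(e^u-1)/u$ otherwise), extended to square matrices via its power series, and set $$\Phi(t):=I_p-tC\Psi(tA)E\in\mathbb{R}^{p\times p}.$$ Suppose $\Phi(t)$ is nonsingular for all $t\in[0,T]$. Then $$\mathfrak{R}(T)=\bigcap_{0\le t\le T}\Phi(t)^{-1}\big(Cx_*(t)+\Theta\big),$$ where $x_*(t):=e^{tA}x(0)+\int_0^t e^{(t-s)A}Bw(s)\,ds$ is the solution of $\dot x=Ax+Bw$ with initial value $x(0)$.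
   Context: For a set $K\subset\mathbb{R}^p$ and a vector $c$, $c+K=\{c+k:k\in K\}$, and $M^{-1}(K)=\{M^{-1}k: k\in K\}$ for invertible $M$. The set $\mathfrak{R}(T)$ consists of those initial backlash outputs $z_0$ which, if held constant over $[0,T]$ as the feedback input of the linear system, always remain in $Cx(t)+\Theta$ (i.e. the backlash output stays at rest on $[0,T]$). *)

theory Defs
  imports "HOL-Analysis.Analysis"
begin

primrec mpow :: "real^'n^'n \<Rightarrow> nat \<Rightarrow> real^'n^'n" where
  "mpow M 0 = mat 1"
| "mpow M (Suc k) = M ** mpow M k"

definition mexp :: "real^'n^'n \<Rightarrow> real^'n^'n" where
  "mexp M = (\<Sum>k. (1 / fact k) *\<^sub>R mpow M k)"

text \<open>Psi(u) = int_0^1 e^{uv} dv = sum_k u^k/(k+1)!, extended to square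
  matrices via its power series.\<close>
definition Psi_mat :: "real^'n^'n \<Rightarrow> real^'n^'n" where
  "Psi_mat M = (\<Sum>k. (1 / fact (Suc k)) *\<^sub>R mpow M k)"

text \<open>x solves xdot = A x + B w + E z0 on [0,T] with x(0) = x0, in the
  (Caratheodory) integral sense.\<close>
definition solves_on ::
  "real^'n^'n \<Rightarrow> real^'m^'n \<Rightarrow> real^'p^'n \<Rightarrow> (real \<Rightarrow> real^'m) \<Rightarrow> real^'p
   \<Rightarrow> real^'n \<Rightarrow> real \<Rightarrow> (real \<Rightarrow> real^'n) \<Rightarrow> bool" where
  "solves_on A B E w z0 x0 T x \<longleftrightarrow>
     (\<forall>t\<in>{0..T}. ((\<lambda>s. A *v x s + B *v w s + E *v z0) has_integral (x t - x0)) {0..t})"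

definition sol ::
  "real^'n^'n \<Rightarrow> real^'m^'n \<Rightarrow> real^'p^'n \<Rightarrow> (real \<Rightarrow> real^'m) \<Rightarrow> real^'p
   \<Rightarrow> real^'n \<Rightarrow> real \<Rightarrow> real \<Rightarrow> real^'n" where
  "sol A B E w z0 x0 T =
     (THE x. solves_on A B E w z0 x0 T x \<and> (\<forall>t. t \<notin> {0..T} \<longrightarrow> x t = 0))"

definition stationary_set ::
  "real^'n^'n \<Rightarrow> real^'m^'n \<Rightarrow> real^'n^'p \<Rightarrow> real^'p^'n \<Rightarrow> (real^'p) set
   \<Rightarrow> (real \<Rightarrow> real^'m) \<Rightarrow> real^'n \<Rightarrow> real \<Rightarrow> (real^'p) set" where
  "stationary_set A B C E \<Theta> w x0 T =
     {z0. \<forall>t\<in>{0..T}. z0 \<in> (\<lambda>\<theta>. C *v sol A B E w z0 x0 T t + \<theta>) ` \<Theta>}"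

end

theory Submission
  imports Defs
begin
lemma mpow_scaleR: "mpow (c *\<^sub>R A) k = (c ^ k) *\<^sub>R mpow A k"
  by (induction k) (auto simp: vec_eq_iff matrix_matrix_mult_def sum_distrib_left algebra_simps scaleR_right.sum)

lemma mpow_Suc': "mpow A (Suc k) = mpow A k ** A"
  by (induction k) (auto simp: matrix_mul_assoc)

lemma mpow_comm: "mpow A k ** A = A ** mpow A k"
  using mpow_Suc'[of A k] by simp

lemma blin_mv: "bounded_linear (\<lambda>X::real^'n^'m. X *v v)"
  by (simp add: linear_conv_bounded_linear[symmetric] linear_iff matrix_vector_mult_def vec_eq_iff sum.distrib sum_distrib_left algebra_simps scaleR_right.sum)

lemma blin_mm_left: "bounded_linear (\<lambda>X::real^'n^'m. X ** Y)"
  by (simp add: linear_conv_bounded_linear[symmetric] linear_iff matrix_matrix_mult_def vec_eq_iff sum.distrib sum_distrib_left algebra_simps scaleR_right.sum)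

lemma blin_mm_right: "bounded_linear (\<lambda>X::real^'n^'m. Y ** X)"
  by (simp add: linear_conv_bounded_linear[symmetric] linear_iff matrix_matrix_mult_def vec_eq_iff sum.distrib sum_distrib_left algebra_simps scaleR_right.sum)

lemma onorm_mpow: "onorm ((*v) (mpow A k)) \<le> onorm ((*v) A) ^ k"
proof (induction k)
  case 0
  have "(*v) (mat 1 :: real^'a^'a) = (\<lambda>x. x)" by (auto simp: matrix_vector_mul_lid)
  then show ?case using onorm_id_le by simp
next
  case (Suc k)
  have "(*v) (mpow A (Suc k)) = (*v) A \<circ> (*v) (mpow A k)"
    by (auto simp: matrix_vector_mul_assoc)
  then have "onorm ((*v) (mpow A (Suc k))) \<le> onorm ((*v) A) * onorm ((*v) (mpow A k))"
    using onorm_compose[of "(*v) A" "(*v) (mpow A k)"] by simp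
  also have "\<dots> \<le> onorm ((*v) A) * onorm ((*v) A) ^ k"
    by (rule mult_left_mono[OF Suc]) (simp add: onorm_pos_le)
  finally show ?case by simp
qed

lemma norm_mat_le: "norm (X::real^'n^'m) \<le> real CARD('m) * real CARD('n) * onorm ((*v) X)"
proof -
  have "norm X \<le> (\<Sum>i\<in>UNIV. norm (X $ i))"
    by (simp add: norm_vec_def L2_set_le_sum)
  also have "\<dots> \<le> (\<Sum>i\<in>UNIV. \<Sum>j\<in>UNIV. \<bar>X $ i $ j\<bar>)"
    by (rule sum_mono) (rule norm_le_l1_cart)
  also have "\<dots> \<le> (\<Sum>i\<in>(UNIV::'m set). \<Sum>j\<in>(UNIV::'n set). onorm ((*v) X))"
    using component_le_onorm[of "(*v) X"] by (intro sum_mono) auto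
  finally show ?thesis by simp
qed

lemma norm_mpow_le: "norm (mpow (A::real^'n^'n) k) \<le> real CARD('n) * real CARD('n) * (onorm ((*v) A) + 1) ^ k"
proof -
  have "norm (mpow A k) \<le> real CARD('n) * real CARD('n) * onorm ((*v) (mpow A k))"
    by (rule norm_mat_le)
  also have "\<dots> \<le> real CARD('n) * real CARD('n) * (onorm ((*v) A) + 1) ^ k"
    apply (rule mult_left_mono)
     apply (rule order_trans[OF onorm_mpow])
     apply (rule power_mono) apply (auto simp: onorm_pos_le)
    done
  finally show ?thesis .
qed

definition ES :: "(nat \<Rightarrow> real^'n^'m) \<Rightarrow> real \<Rightarrow> real^'n^'m" where
  "ES N t = (\<Sum>k. (t^k / fact k) *\<^sub>R N k)"

lemma ES_summable:
  fixes N :: "nat \<Rightarrow> real^'n^'m"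
  assumes "\<And>k. norm (N k) \<le> K * r^k"
  shows "summable (\<lambda>k. (t^k / fact k) *\<^sub>R N k)"
proof -
  have S: "summable (\<lambda>k. K * (inverse (fact k) * (\<bar>t\<bar> * r) ^ k))"
    by (intro summable_mult summable_exp)
  have *: "norm ((t^k / fact k) *\<^sub>R N k) \<le> K * (inverse (fact k) * (\<bar>t\<bar> * r) ^ k)" for k
  proof -
  have "norm ((t^k / fact k) *\<^sub>R N k) = (\<bar>t\<bar>^k / fact k) * norm (N k)"
    by (simp add: power_abs)
  also have "\<dots> \<le> (\<bar>t\<bar>^k / fact k) * (K * r^k)"
    by (rule mult_left_mono[OF assms]) simp
  also have "\<dots> = K * (inverse (fact k) * (\<bar>t\<bar> * r) ^ k)"
    by (simp add: field_simps power_mult_distrib)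
  finally show "norm ((t^k / fact k) *\<^sub>R N k) \<le> K * (inverse (fact k) * (\<bar>t\<bar> * r) ^ k)" .
  qed
  show ?thesis by (rule summable_comparison_test'[OF S]) (rule *)
qed

lemma scaleR_mv: "((c::real) *\<^sub>R (X::real^'n^'m)) *v v = c *\<^sub>R (X *v v)"
  by (simp add: vec_eq_iff matrix_vector_mult_def sum_distrib_left mult.assoc vector_scaleR_component real_scaleR_def)

lemma blin_comp: "bounded_linear (\<lambda>X::real^'n^'m. (X *v v) $ i)"
  using bounded_linear_compose[OF bounded_linear_vec_nth blin_mv] .

lemma ES_comp:
  assumes "\<And>k. norm (N k) \<le> K * r^k"
  shows "(ES N t *v v) $ i = (\<Sum>k. ((N k *v v) $ i / fact k) * t^k)"
    and "summable (\<lambda>k. ((N k *v v) $ i / fact k) * t^k)"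
proof -
  have s: "summable (\<lambda>k. (t^k / fact k) *\<^sub>R N k)" by (rule ES_summable[OF assms])
  have "(ES N t *v v) $ i = (\<Sum>k. (((t^k / fact k) *\<^sub>R N k) *v v) $ i)"
    unfolding ES_def by (rule bounded_linear.suminf[OF blin_comp s])
  also have "\<dots> = (\<Sum>k. ((N k *v v) $ i / fact k) * t^k)"
    by (simp add: scaleR_mv mult.commute)
  finally show "(ES N t *v v) $ i = (\<Sum>k. ((N k *v v) $ i / fact k) * t^k)" .
  have "summable (\<lambda>k. (((t^k / fact k) *\<^sub>R N k) *v v) $ i)"
    by (rule bounded_linear.summable[OF blin_comp s])
  then show "summable (\<lambda>k. ((N k *v v) $ i / fact k) * t^k)"
    by (simp add: scaleR_mv ac_simps)
qed

lemma ES_deriv: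
  assumes "\<And>k. norm (N k) \<le> K * r^k" and "r \<ge> 0"
  shows "((\<lambda>t. (ES N t *v v) $ i) has_real_derivative (ES (\<lambda>k. N (Suc k)) t *v v) $ i) (at t)"
proof -
  define c where "c k = (N k *v v) $ i / fact k" for k
  have as: "norm (N (Suc k)) \<le> (K * r) * r^k" for k
    using assms(1)[of "Suc k"] by (simp add: mult.assoc)
  have "((\<lambda>t. \<Sum>k. c k * t^k) has_real_derivative (\<Sum>k. diffs c k * t^k)) (at t)"
    by (rule termdiffs_strong_converges_everywhere) (use ES_comp(2)[OF assms(1)] c_def in auto)
  moreover have "(\<lambda>t. (ES N t *v v) $ i) = (\<lambda>t. \<Sum>k. c k * t^k)"
    using ES_comp(1)[OF assms(1)] c_def by auto
  moreover have "(\<Sum>k. diffs c k * t^k) = (ES (\<lambda>k. N (Suc k)) t *v v) $ i"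
    unfolding ES_comp(1)[OF as] diffs_def c_def
    by (simp add: fact_Suc field_simps del: of_nat_Suc)
  ultimately show ?thesis by simp
qed

lemma ES_zero: "ES N 0 = N 0"
proof -
  have "(\<lambda>k. ((0::real)^k / fact k) *\<^sub>R N k) = (\<lambda>k. if k = 0 then N 0 else 0)"
    by (auto simp: fun_eq_iff)
  then show ?thesis unfolding ES_def using sums_single[of 0 "\<lambda>_. N 0"] sums_unique by fastforce
qed

lemma mm_zero_left[simp]: "(0::real^'n^'m) ** X = 0"
  by (simp add: vec_eq_iff matrix_matrix_mult_def)

lemma mm_zero_right[simp]: "(X::real^'n^'m) ** 0 = (0::real^'p^'m)"
  by (simp add: vec_eq_iff matrix_matrix_mult_def)

lemma scaleR_mm: "((c::real) *\<^sub>R (X::real^'n^'m)) ** Y = c *\<^sub>R (X ** Y)"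
  by (simp add: vec_eq_iff matrix_matrix_mult_def sum_distrib_left mult.assoc vector_scaleR_component real_scaleR_def)

lemma mm_scaleR: "(Y::real^'n^'m) ** ((c::real) *\<^sub>R X) = c *\<^sub>R (Y ** X)"
  by (simp add: vec_eq_iff matrix_matrix_mult_def sum_distrib_left mult.left_commute vector_scaleR_component real_scaleR_def)

lemma ES_mult_left:
  fixes N :: "nat \<Rightarrow> real^'n^'m"
  assumes "summable (\<lambda>k. (t^k / fact k) *\<^sub>R N k)"
  shows "ES N t ** Y = ES (\<lambda>k. N k ** Y) t"
  unfolding ES_def using bounded_linear.suminf[OF blin_mm_left assms, of Y]
  by (simp add: scaleR_mm)

lemma ES_mult_right:
  fixes N :: "nat \<Rightarrow> real^'n^'m"
  assumes "summable (\<lambda>k. (t^k / fact k) *\<^sub>R N k)"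
  shows "Y ** ES N t = ES (\<lambda>k. Y ** N k) t"
  unfolding ES_def using bounded_linear.suminf[OF blin_mm_right assms, of Y]
  by (simp add: mm_scaleR)

lemma summable_mult_right:
  fixes N :: "nat \<Rightarrow> real^'n^'m"
  assumes "summable (\<lambda>k. (t^k / fact k) *\<^sub>R N k)"
  shows "summable (\<lambda>k. (t^k / fact k) *\<^sub>R (Y ** N k))"
  using bounded_linear.summable[OF blin_mm_right assms, of Y] by (simp add: mm_scaleR)

definition NQ :: "real^'n^'n \<Rightarrow> nat \<Rightarrow> real^'n^'n" where
  "NQ A k = (case k of 0 \<Rightarrow> 0 | Suc j \<Rightarrow> mpow A j)"

definition cA :: "real^'n^'n \<Rightarrow> real" where "cA A = real CARD('n) * real CARD('n)"
definition rA :: "real^'n^'n \<Rightarrow> real" where "rA A = onorm ((*v) A) + 1"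

lemma rA_ge: "rA A \<ge> 1"
  by (simp add: rA_def onorm_pos_le)

lemma bnd_mpow: "norm (mpow A k) \<le> cA A * rA A ^ k"
  unfolding cA_def rA_def by (rule norm_mpow_le)

lemma bnd_NQ: "norm (NQ A k) \<le> cA A * rA A ^ k"
proof (cases k)
  case 0 then show ?thesis by (simp add: NQ_def cA_def)
next
  case (Suc j)
  have "norm (NQ A k) \<le> cA A * rA A ^ j" using bnd_mpow[of A j] Suc by (simp add: NQ_def)
  also have "\<dots> \<le> cA A * rA A ^ k"
    using Suc rA_ge[of A] by (intro mult_left_mono power_increasing) (auto simp: cA_def)
  finally show ?thesis .
qed

lemma mexp_ES: "mexp (t *\<^sub>R A) = ES (mpow A) t"
  unfolding mexp_def ES_def mpow_scaleR by (simp add: scaleR_scaleR)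

lemma Psi_ES: "t *\<^sub>R Psi_mat (t *\<^sub>R A) = ES (NQ A) t"
proof -
  have s: "summable (\<lambda>k. (t^k / fact k) *\<^sub>R NQ A k)" by (rule ES_summable[OF bnd_NQ])
  have s2: "summable (\<lambda>k. (1 / fact (Suc k)) *\<^sub>R mpow (t *\<^sub>R A) k)"
  proof -
    have "summable (\<lambda>k. (t^(Suc k) / fact (Suc k)) *\<^sub>R NQ A (Suc k))"
      using summable_Suc_iff[of "\<lambda>k. (t^k / fact k) *\<^sub>R NQ A k", THEN iffD2, OF s] by simp
    then have "summable (\<lambda>k. (1/t) *\<^sub>R ((t^(Suc k) / fact (Suc k)) *\<^sub>R NQ A (Suc k)))"
      by (rule summable_scaleR_right)
    moreover have "t \<noteq> 0 \<Longrightarrow> (1/t) *\<^sub>R ((t^(Suc k) / fact (Suc k)) *\<^sub>R NQ A (Suc k)) = (1 / fact (Suc k)) *\<^sub>R mpow (t *\<^sub>R A) k" for k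
      by (simp add: NQ_def mpow_scaleR scaleR_scaleR)
    moreover have "t = 0 \<Longrightarrow> summable (\<lambda>k. (1 / fact (Suc k)) *\<^sub>R mpow (t *\<^sub>R A) k)"
      by (rule summable_finite[of "{0}"]) (auto simp: gr0_conv_Suc)
    ultimately show ?thesis
      by (cases "t = 0") auto
  qed
  have "t *\<^sub>R Psi_mat (t *\<^sub>R A) = (\<Sum>k. t *\<^sub>R ((1 / fact (Suc k)) *\<^sub>R mpow (t *\<^sub>R A) k))"
    unfolding Psi_mat_def by (rule suminf_scaleR_right[OF s2])
  also have "\<dots> = (\<Sum>k. (t^(Suc k) / fact (Suc k)) *\<^sub>R NQ A (Suc k))"
    by (simp add: NQ_def mpow_scaleR scaleR_scaleR)
  also have "\<dots> = ES (NQ A) t"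
    unfolding ES_def using suminf_split_head[OF s] by (simp add: NQ_def)
  finally show ?thesis .
qed

lemma rA_nonneg: "rA A \<ge> 0" using rA_ge[of A] by simp

lemma M_comm: "mexp (t *\<^sub>R A) ** A = A ** mexp (t *\<^sub>R A)"
  unfolding mexp_ES
  using ES_mult_left[OF ES_summable[OF bnd_mpow[of A]], where Y=A] ES_mult_right[OF ES_summable[OF bnd_mpow[of A]], where Y=A]
  by (simp add: mpow_comm)

lemma M_deriv_comp: "((\<lambda>t. (mexp (t *\<^sub>R A) *v v) $ i) has_real_derivative (mexp (t *\<^sub>R A) *v (A *v v)) $ i) (at t)"
proof -
  have "((\<lambda>t. (ES (mpow A) t *v v) $ i) has_real_derivative (ES (\<lambda>k. mpow A (Suc k)) t *v v) $ i) (at t)"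
    by (rule ES_deriv[OF bnd_mpow rA_nonneg])
  moreover have "ES (\<lambda>k. mpow A (Suc k)) t = ES (mpow A) t ** A"
    using ES_mult_left[OF ES_summable[OF bnd_mpow[of A]], where Y=A] by (simp add: mpow_comm)
  ultimately show ?thesis by (simp add: mexp_ES matrix_vector_mul_assoc)
qed

lemma Q_deriv_comp: "((\<lambda>t. ((t *\<^sub>R Psi_mat (t *\<^sub>R A)) *v v) $ i) has_real_derivative (mexp (t *\<^sub>R A) *v v) $ i) (at t)"
proof -
  have "((\<lambda>t. (ES (NQ A) t *v v) $ i) has_real_derivative (ES (\<lambda>k. NQ A (Suc k)) t *v v) $ i) (at t)"
    by (rule ES_deriv[OF bnd_NQ rA_nonneg])
  then show ?thesis by (simp add: mexp_ES Psi_ES NQ_def)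
qed

lemma M_AQ: "mexp (t *\<^sub>R A) = mat 1 + A ** (t *\<^sub>R Psi_mat (t *\<^sub>R A))"
proof -
  define f where "f k = (t^k / fact k) *\<^sub>R mpow A k" for k
  define g where "g k = (t^k / fact k) *\<^sub>R (A ** NQ A k)" for k
  have sf: "summable f" unfolding f_def by (rule ES_summable[OF bnd_mpow])
  have sg: "summable g" unfolding g_def by (rule summable_mult_right[OF ES_summable[OF bnd_NQ]])
  have e: "A ** ES (NQ A) t = suminf g"
    unfolding g_def using ES_mult_right[OF ES_summable[OF bnd_NQ[of A]], where Y=A] by (simp add: ES_def)
  have "suminf f = f 0 + (\<Sum>n. f (Suc n))" using suminf_split_head[OF sf] by simp
  also have "(\<Sum>n. f (Suc n)) = (\<Sum>n. g (Suc n))"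
    by (simp add: f_def g_def NQ_def)
  also have "\<dots> = suminf g" using suminf_split_head[OF sg] by (simp add: g_def NQ_def)
  finally have 1: "suminf f = f 0 + suminf g" .
  have 2: "mexp (t *\<^sub>R A) = suminf f" by (simp add: mexp_ES ES_def f_def[abs_def])
  have 3: "A ** (t *\<^sub>R Psi_mat (t *\<^sub>R A)) = suminf g" by (simp only: Psi_ES e)
  have 4: "f 0 = mat 1" by (simp add: f_def)
  show ?thesis using 1 2 3 4 by simp
qed

lemma M0: "mexp (0 *\<^sub>R A) = mat 1"
  by (simp only: mexp_ES ES_zero) simp

lemma vec_deriv:
  fixes f :: "real \<Rightarrow> real^'n"
  assumes "\<And>i. ((\<lambda>t. f t $ i) has_real_derivative f' $ i) (at t within S)"
  shows "(f has_vector_derivative f') (at t within S)"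
  unfolding has_vector_derivative_def
proof (subst has_derivative_componentwise_within, intro ballI)
  fix b :: "real^'n" assume "b \<in> Basis"
  then obtain i where b: "b = axis i 1" by (auto simp: Basis_vec_def)
  have e: "(\<lambda>x. x * f' $ i) = (*) (f' $ i)" by (auto simp: fun_eq_iff)
  show "((\<lambda>x. f x \<bullet> b) has_derivative (\<lambda>x. x *\<^sub>R f' \<bullet> b)) (at t within S)"
    using assms[of i] by (simp add: b inner_axis has_field_derivative_def e)
qed

lemma M_deriv_vec: "((\<lambda>t. mexp (t *\<^sub>R A) *v v) has_vector_derivative A *v (mexp (t *\<^sub>R A) *v v)) (at t within S)"
proof -
  have e: "A *v (mexp (t *\<^sub>R A) *v v) = mexp (t *\<^sub>R A) *v (A *v v)"
    by (simp add: matrix_vector_mul_assoc M_comm)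
  show ?thesis
    apply (rule vec_deriv)
    apply (rule has_field_derivative_at_within)
    apply (subst e)
    apply (rule M_deriv_comp)
    done
qed

lemma Q_deriv_vec: "((\<lambda>t. (t *\<^sub>R Psi_mat (t *\<^sub>R A)) *v v) has_vector_derivative mexp (t *\<^sub>R A) *v v) (at t within S)"
  apply (rule vec_deriv)
  apply (rule has_field_derivative_at_within)
  apply (rule Q_deriv_comp)
  done

lemma comp_deriv_vec:
  fixes f :: "real \<Rightarrow> real^'n"
  assumes "(f has_vector_derivative f') F"
  shows "((\<lambda>s. f s $ j) has_real_derivative f' $ j) F"
  using bounded_linear.has_vector_derivative[OF bounded_linear_vec_nth assms, of j]
  by (simp add: has_real_derivative_iff_has_vector_derivative)

lemma M_entry_deriv:
  "((\<lambda>s. mexp ((t - s) *\<^sub>R A) $ i $ j) has_real_derivative - ((mexp ((t - s) *\<^sub>R A) ** A) $ i $ j)) (at s)"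
proof -
  have e1: "mexp (\<tau> *\<^sub>R A) $ i $ j = (mexp (\<tau> *\<^sub>R A) *v axis j 1) $ i" for \<tau>
    by (simp add: matrix_vector_mult_basis column_def)
  have e2: "(mexp (\<tau> *\<^sub>R A) *v (A *v axis j 1)) $ i = (mexp (\<tau> *\<^sub>R A) ** A) $ i $ j" for \<tau>
    by (subst matrix_vector_mul_assoc) (simp add: matrix_vector_mult_basis column_def)
  have "((\<lambda>\<tau>. mexp (\<tau> *\<^sub>R A) $ i $ j) has_real_derivative (mexp ((t - s) *\<^sub>R A) ** A) $ i $ j) (at (t - s))"
    using M_deriv_comp[where A=A and v="axis j 1" and i=i and t="t - s"] by (simp add: e1 e2)
  moreover have g: "((\<lambda>s. t - s) has_real_derivative -1) (at s)"
    by (auto intro!: derivative_eq_intros)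
  ultimately have "((\<lambda>s. mexp ((t - s) *\<^sub>R A) $ i $ j) has_real_derivative (mexp ((t - s) *\<^sub>R A) ** A) $ i $ j * -1) (at s)"
    by (rule DERIV_chain2[where f="\<lambda>\<tau>. mexp (\<tau> *\<^sub>R A) $ i $ j" and g="\<lambda>s. t - s"])
  then show ?thesis by simp
qed

lemma sol_unique:
  fixes A :: "real^'n^'n" and B :: "real^'m^'n" and E :: "real^'p^'n"
  assumes x: "solves_on A B E w z0 x0 T x" and y: "solves_on A B E w z0 x0 T y"
    and t: "t \<in> {0..T}"
  shows "x t = y t"
proof -
  define d where "d s = x s - y s" for s
  have hd: "((\<lambda>s. A *v d s) has_integral d \<tau>) {0..\<tau>}" if "\<tau> \<in> {0..T}" for \<tau>
  proof -
    have "((\<lambda>s. (A *v x s + B *v w s + E *v z0) - (A *v y s + B *v w s + E *v z0)) has_integral ((x \<tau> - x0) - (y \<tau> - x0))) {0..\<tau>}"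
      by (rule has_integral_diff) (use x y that in \<open>auto simp: solves_on_def\<close>)
    then show ?thesis by (simp add: d_def matrix_vector_mult_diff_distrib)
  qed
  have d0: "d 0 = 0"
  proof (rule has_integral_unique)
    show "((\<lambda>s. A *v d s) has_integral d 0) {0..0::real}" by (rule hd) (use t in auto)
    show "((\<lambda>s. A *v d s) has_integral 0) {0..0::real}"
      using has_integral_refl(1)[of "\<lambda>s. A *v d s" "0::real"] by simp
  qed
  have int: "(\<lambda>s. A *v d s) integrable_on {0..T}" using hd[of T] t by auto
  have deq: "d \<tau> = integral {0..\<tau>} (\<lambda>s. A *v d s)" if "\<tau> \<in> {0..T}" for \<tau>
    using hd[OF that] by (simp add: integral_unique)
  have cont: "continuous_on {0..T} d"
    using continuous_on_eq[OF indefinite_integral_continuous_1[OF int]] deq by auto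
  have contA: "continuous_on {0..T} (\<lambda>s. A *v d s)"
    using bounded_linear.continuous_on[OF matrix_vector_mul_bounded_linear cont] .
  have dder: "(d has_vector_derivative A *v d \<tau>) (at \<tau> within {0..T})" if "\<tau> \<in> {0..T}" for \<tau>
    by (rule has_vector_derivative_transform[OF that deq integral_has_vector_derivative[OF contA that]])
  define h where "h s = mexp ((t - s) *\<^sub>R A) *v d s" for s
  have "d t $ i = 0" for i
  proof -
    have hi: "h s $ i = (\<Sum>j\<in>UNIV. mexp ((t - s) *\<^sub>R A) $ i $ j * d s $ j)" for s
      by (simp add: h_def matrix_vector_mult_def)
    have der: "((\<lambda>s. h s $ i) has_real_derivative 0) (at s within {0..t})" if s: "s \<in> {0..t}" for s
    proof -
      let ?X = "mexp ((t - s) *\<^sub>R A)"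
      have sT: "s \<in> {0..T}" using s t by auto
      have dj: "((\<lambda>s. d s $ j) has_real_derivative (A *v d s) $ j) (at s within {0..t})" for j
        using comp_deriv_vec[OF dder[OF sT], of j] DERIV_subset t by force
      have "((\<lambda>s. \<Sum>j\<in>UNIV. mexp ((t - s) *\<^sub>R A) $ i $ j * d s $ j) has_real_derivative
              (\<Sum>j\<in>UNIV. - ((?X ** A) $ i $ j) * d s $ j + ?X $ i $ j * (A *v d s) $ j)) (at s within {0..t})"
        by (intro DERIV_sum, rule DERIV_cong[OF DERIV_mult[OF has_field_derivative_at_within[OF M_entry_deriv] dj]])
           (simp add: algebra_simps)
      moreover have "(\<Sum>j\<in>UNIV. - ((?X ** A) $ i $ j) * d s $ j + ?X $ i $ j * (A *v d s) $ j)
          = - (((?X ** A) *v d s) $ i) + (?X *v (A *v d s)) $ i"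
        by (simp add: matrix_vector_mult_def sum.distrib sum_negf sum_subtractf)
      moreover have "(?X ** A) *v d s = ?X *v (A *v d s)" by (simp add: matrix_vector_mul_assoc)
      ultimately show ?thesis using hi by simp
    qed
    obtain c where c: "\<forall>s\<in>{0..t}. h s $ i = c"
      using has_field_derivative_zero_constant[of "{0..t}" "\<lambda>s. h s $ i"] der by auto
    have "h t $ i = h 0 $ i" using c t by auto
    moreover have "h t = d t" using M0[of A] by (simp add: h_def)
    moreover have "h 0 = 0" by (simp add: h_def d0)
    ultimately show ?thesis by simp
  qed
  then show ?thesis by (simp add: d_def vec_eq_iff)
qed

lemma sf_leb: "sigma_finite_measure (lebesgue :: real measure)"
proof (rule sigma_finite_measure.intro)
  let ?A = "range (\<lambda>n::nat. {- real n .. real n})"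
  show "\<exists>A::real set set. countable A \<and> A \<subseteq> sets lebesgue \<and> \<Union>A = space lebesgue \<and> (\<forall>a\<in>A. emeasure lebesgue a \<noteq> \<infinity>)"
  proof (intro exI conjI)
    show "countable ?A" by simp
    show "?A \<subseteq> sets lebesgue" using lmeasurable_cbox[of "-real n" "real n" for n] by auto
    have "x \<in> \<Union>?A" for x :: real
    proof -
      obtain n :: nat where "\<bar>x\<bar> \<le> real n" using real_arch_simple by blast
      then have "x \<in> {- real n..real n}" by auto
      then show ?thesis by blast
    qed
    then show "\<Union>?A = space lebesgue" by auto
    show "\<forall>a\<in>?A. emeasure lebesgue a \<noteq> \<infinity>"
      using lmeasurable_cbox[of "-real n" "real n" for n] fmeasurableD2 by auto
  qed
qed

interpretation lebR: sigma_finite_measure "lebesgue :: real measure" by (rule sf_leb)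
interpretation lebP: pair_sigma_finite "lebesgue :: real measure" "lebesgue :: real measure" ..

lemma fst_leb[measurable]: "fst \<in> borel_measurable (lebesgue \<Otimes>\<^sub>M (lebesgue :: real measure))"
  using measurable_compose[OF measurable_fst id_borel_measurable_lebesgue] by (simp add: id_def)
lemma snd_leb[measurable]: "snd \<in> borel_measurable ((lebesgue :: real measure) \<Otimes>\<^sub>M lebesgue)"
  using measurable_compose[OF measurable_snd id_borel_measurable_lebesgue] by (simp add: id_def)

lemma bilinear_mv: "bilinear (\<lambda>(X::real^'n^'m) v. X *v v)"
  unfolding bilinear_def
  by (auto simp: linear_iff matrix_vector_right_distrib matrix_vector_mult_add_rdistrib scaleR_mv vec_eq_iff matrix_vector_mult_def sum_distrib_left sum.distrib algebra_simps)

lemma mv_norm_bound: "norm ((X::real^'n^'m) *v v) \<le> real CARD('m) * real CARD('n) * norm X * norm v"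
proof -
  have "norm (X *v v) \<le> onorm ((*v) X) * norm v" by (rule onorm) simp
  also have "onorm ((*v) X) \<le> (\<Sum>i\<in>UNIV. \<Sum>j\<in>UNIV. \<bar>X $ i $ j\<bar>)" by (rule onorm_le_matrix_component_sum)
  also have "\<dots> \<le> (\<Sum>i\<in>(UNIV::'m set). \<Sum>j\<in>(UNIV::'n set). norm X)"
  proof (intro sum_mono)
    fix i j
    have "\<bar>X $ i $ j\<bar> \<le> norm (X $ i)" using component_le_norm_cart[of "X $ i" j] by simp
    also have "\<dots> \<le> norm X" by (rule Finite_Cartesian_Product.norm_nth_le)
    finally show "\<bar>X $ i $ j\<bar> \<le> norm X" .
  qed
  finally show ?thesis by (simp add: mult_right_mono mult.assoc)
qed

lemma bilinear_mv': "bilinear ((*v) :: real^'n^'m \<Rightarrow> real^'n \<Rightarrow> real^'m)"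
  by (rule bilinear_mv)

lemma absint_mv:
  fixes u :: "real \<Rightarrow> real^'n" and K :: "real \<Rightarrow> real^'n^'m"
  assumes u: "u absolutely_integrable_on {a..b}" and K: "continuous_on {a..b} K"
  shows "(\<lambda>r. K r *v u r) absolutely_integrable_on {a..b}"
proof (rule absolutely_integrable_bounded_measurable_product[OF bilinear_mv' _ _ _ u])
  show "K \<in> borel_measurable (lebesgue_on {a..b})"
    by (rule continuous_imp_measurable_on_sets_lebesgue[OF K]) simp
  show "{a..b} \<in> sets lebesgue" by simp
  show "bounded (K ` {a..b})"
    by (rule compact_imp_bounded[OF compact_continuous_image[OF K]]) simp
qed

lemma mv_cont:
  fixes f :: "'a::t2_space \<Rightarrow> real^'n^'m" and g :: "'a \<Rightarrow> real^'n"
  assumes "continuous_on S f" "continuous_on S g"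
  shows "continuous_on S (\<lambda>x. (f x :: real^'n^'m) *v (g x :: real^'n))"
  using bilinear_continuous_on_compose[OF assms bilinear_mv'] .

lemma K_bound:
  fixes K :: "real \<Rightarrow> real^'n^'m"
  assumes K: "continuous_on {a..b} K"
  obtains C where "C \<ge> 0" "\<And>\<tau> v. \<tau> \<in> {a..b} \<Longrightarrow> norm (K \<tau> *v v) \<le> C * norm v"
proof -
  from compact_imp_bounded[OF compact_continuous_image[OF K]]
  obtain B where B0: "\<forall>x\<in>K ` {a..b}. norm x \<le> B"
    unfolding bounded_iff by blast
  then have B: "\<And>\<tau>. \<tau> \<in> {a..b} \<Longrightarrow> norm (K \<tau>) \<le> B" by blast
  define C where "C = real CARD('m) * real CARD('n) * max B 0"
  show ?thesis
  proof
    show "C \<ge> 0" by (simp add: C_def)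
    fix \<tau> v assume "\<tau> \<in> {a..b}"
    have "norm (K \<tau> *v v) \<le> real CARD('m) * real CARD('n) * norm (K \<tau>) * norm v" by (rule mv_norm_bound)
    also have "\<dots> \<le> C * norm v" unfolding C_def
      using B[OF \<open>\<tau> \<in> {a..b}\<close>] by (intro mult_right_mono mult_left_mono) auto
    finally show "norm (K \<tau> *v v) \<le> C * norm v" .
  qed
qed

lemma fubini_tri:
  fixes u :: "real \<Rightarrow> real^'n" and K :: "real \<Rightarrow> real^'n^'n"
  assumes u: "u absolutely_integrable_on {0..t}" and K: "continuous_on UNIV K" and t0: "0 \<le> t"
  shows "(\<lambda>s. integral {0..s} (\<lambda>r. K (s - r) *v u r)) integrable_on {0..t}"
    and "(\<lambda>r. integral {r..t} (\<lambda>s. K (s - r) *v u r)) integrable_on {0..t}"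
    and "integral {0..t} (\<lambda>s. integral {0..s} (\<lambda>r. K (s - r) *v u r))
         = integral {0..t} (\<lambda>r. integral {r..t} (\<lambda>s. K (s - r) *v u r))"
proof -
  define u' where "u' r = indicator {0..t} r *\<^sub>R u r" for r
  have iu': "integrable lebesgue u'" using u by (simp add: set_integrable_def u'_def[abs_def])
  have mu'[measurable]: "u' \<in> borel_measurable lebesgue" using iu' by auto
  obtain C where C0: "C \<ge> 0" and C: "\<And>\<tau> v. \<tau> \<in> {0..t} \<Longrightarrow> norm (K \<tau> *v v) \<le> C * norm v"
    using K_bound[OF continuous_on_subset[OF K subset_UNIV]] by blast
  define F where "F r s = (if 0 \<le> r \<and> r \<le> s \<and> s \<le> t then K (s - r) *v u' r else 0)" for r s
  have mK[measurable]: "K \<in> borel_measurable borel" by (rule borel_measurable_continuous_onI[OF K])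
  have Fm[measurable]: "case_prod F \<in> borel_measurable (lebesgue \<Otimes>\<^sub>M lebesgue)"
  proof -
    have "(\<lambda>p. K (snd p - fst p) *v u' (fst p)) \<in> borel_measurable (lebesgue \<Otimes>\<^sub>M lebesgue)"
      by (rule borel_measurable_continuous_Pair[where H="(*v)"])
         (measurable, rule mv_cont, auto intro: continuous_intros)
    then show ?thesis unfolding F_def split_beta' by measurable
  qed
  have Fb: "norm (F r s) \<le> C * norm (u' r) * indicator {0..t} s" for r s
    using C[of "s - r" "u' r"] C0 by (auto simp: F_def indicator_def)
  have fm: "{0..t} \<in> fmeasurable lebesgue" using lmeasurable_cbox[of 0 t] by simp
  have ii: "integrable lebesgue (indicator {0..t} :: real \<Rightarrow> real)"
    using fm by (intro integrable_real_indicator) (auto simp: emeasure_lborel_Icc_eq less_top[symmetric])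
  have ind_int: "integrable lebesgue (\<lambda>s::real. c * indicator {0..t} s)" for c :: real
    using integrable_mult_right[OF ii, of c] by simp
  have mt: "measure lebesgue {0..t} = t" using t0 by simp
  have ibound: "(\<integral>s. norm (F r s) \<partial>lebesgue) \<le> C * norm (u' r) * t" for r
  proof -
    have "(\<integral>s. norm (F r s) \<partial>lebesgue) \<le> (\<integral>s. (C * norm (u' r)) * indicator {0..t} s \<partial>lebesgue)"
      by (rule integral_mono'[OF ind_int]) (use Fb C0 in auto)
    also have "\<dots> = C * norm (u' r) * t" using ii mt by simp
    finally show ?thesis .
  qed
  have Fint: "integrable (lebesgue \<Otimes>\<^sub>M lebesgue) (case_prod F)"
  proof (rule lebP.Fubini_integrable[OF Fm])
    show "integrable lebesgue (\<lambda>r. \<integral>s. norm (case_prod F (r, s)) \<partial>lebesgue)"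
    proof (rule Bochner_Integration.integrable_bound[where f="\<lambda>r. (C * t) * norm (u' r)"])
      show "integrable lebesgue (\<lambda>r. (C * t) * norm (u' r))"
        by (intro integrable_mult_right integrable_norm iu')
      show "(\<lambda>r. \<integral>s. norm (case_prod F (r, s)) \<partial>lebesgue) \<in> borel_measurable lebesgue"
        by measurable
      show "AE r in lebesgue. norm (\<integral>s. norm (case_prod F (r, s)) \<partial>lebesgue) \<le> norm ((C * t) * norm (u' r))"
      proof (rule AE_I2)
        fix r
        have "0 \<le> (\<integral>s. norm (F r s) \<partial>lebesgue)" by simp
        then show "norm (\<integral>s. norm (case_prod F (r, s)) \<partial>lebesgue) \<le> norm ((C * t) * norm (u' r))"
          using ibound[of r] C0 t0 by (simp add: abs_mult mult_ac)
      qed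
    qed
    show "AE r in lebesgue. integrable lebesgue (\<lambda>s. case_prod F (r, s))"
    proof (rule AE_I2)
      fix r
      show "integrable lebesgue (\<lambda>s. case_prod F (r, s))"
      proof (rule Bochner_Integration.integrable_bound[OF ind_int[of "C * norm (u' r)"]])
        show "(\<lambda>s. case_prod F (r, s)) \<in> borel_measurable lebesgue" by measurable
        show "AE s in lebesgue. norm (case_prod F (r, s)) \<le> norm (C * norm (u' r) * indicator {0..t} s)"
          using Fb C0 by (auto simp: abs_mult)
      qed
    qed
  qed
  have absK: "(\<lambda>r. K (s - r) *v u r) absolutely_integrable_on {0..s}" if "s \<in> {0..t}" for s
  proof (rule absint_mv)
    show "u absolutely_integrable_on {0..s}"
      by (rule set_integrable_subset[OF u]) (use that in auto)
    show "continuous_on {0..s} (\<lambda>r. K (s - r))"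
      by (intro continuous_on_compose2[OF K] continuous_intros) auto
  qed
  have absK2: "(\<lambda>s. K (s - r) *v u r) absolutely_integrable_on {r..t}" for r
    by (intro absolutely_integrable_continuous_real mv_cont continuous_on_compose2[OF K] continuous_intros) auto
  have in1: "(\<integral>r. F r s \<partial>lebesgue) = indicator {0..t} s *\<^sub>R integral {0..s} (\<lambda>r. K (s - r) *v u r)" for s
  proof (cases "s \<in> {0..t}")
    case True
    have "(\<integral>r. F r s \<partial>lebesgue) = (LINT r:{0..s}|lebesgue. K (s - r) *v u r)"
      unfolding set_lebesgue_integral_def
      by (rule Bochner_Integration.integral_cong) (use True in \<open>auto simp: F_def u'_def indicator_def\<close>)
    also have "\<dots> = integral {0..s} (\<lambda>r. K (s - r) *v u r)"
      by (rule set_lebesgue_integral_eq_integral(2)[OF absK[OF True]])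
    finally show ?thesis using True by simp
  next
    case False
    then have "F r s = 0" for r by (auto simp: F_def)
    then show ?thesis using False by simp
  qed
  have in2: "(\<integral>s. F r s \<partial>lebesgue) = indicator {0..t} r *\<^sub>R integral {r..t} (\<lambda>s. K (s - r) *v u r)" for r
  proof (cases "r \<in> {0..t}")
    case True
    have "(\<integral>s. F r s \<partial>lebesgue) = (LINT s:{r..t}|lebesgue. K (s - r) *v u r)"
      unfolding set_lebesgue_integral_def
      by (rule Bochner_Integration.integral_cong) (use True in \<open>auto simp: F_def u'_def indicator_def\<close>)
    also have "\<dots> = integral {r..t} (\<lambda>s. K (s - r) *v u r)"
      by (rule set_lebesgue_integral_eq_integral(2)[OF absK2])
    finally show ?thesis using True by simp
  next
    case False
    then have "F r s = 0" for s by (auto simp: F_def u'_def)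
    then show ?thesis using False by simp
  qed
  have I1: "set_integrable lebesgue {0..t} (\<lambda>s. integral {0..s} (\<lambda>r. K (s - r) *v u r))"
    using lebP.integrable_snd[OF Fint] unfolding set_integrable_def in1 .
  have I2: "set_integrable lebesgue {0..t} (\<lambda>r. integral {r..t} (\<lambda>s. K (s - r) *v u r))"
    using lebP.integrable_fst[OF Fint] unfolding set_integrable_def in2 .
  show "(\<lambda>s. integral {0..s} (\<lambda>r. K (s - r) *v u r)) integrable_on {0..t}"
    by (rule set_lebesgue_integral_eq_integral(1)[OF I1])
  show "(\<lambda>r. integral {r..t} (\<lambda>s. K (s - r) *v u r)) integrable_on {0..t}"
    by (rule set_lebesgue_integral_eq_integral(1)[OF I2])
  have "integral {0..t} (\<lambda>s. integral {0..s} (\<lambda>r. K (s - r) *v u r))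
      = (\<integral>s. (\<integral>r. F r s \<partial>lebesgue) \<partial>lebesgue)"
    using set_lebesgue_integral_eq_integral(2)[OF I1] unfolding set_lebesgue_integral_def in1 by simp
  also have "\<dots> = (\<integral>r. (\<integral>s. F r s \<partial>lebesgue) \<partial>lebesgue)"
    by (rule lebP.Fubini_integral[OF Fint])
  also have "\<dots> = integral {0..t} (\<lambda>r. integral {r..t} (\<lambda>s. K (s - r) *v u r))"
    using set_lebesgue_integral_eq_integral(2)[OF I2] unfolding set_lebesgue_integral_def in2 by simp
  finally show "integral {0..t} (\<lambda>s. integral {0..s} (\<lambda>r. K (s - r) *v u r))
         = integral {0..t} (\<lambda>r. integral {r..t} (\<lambda>s. K (s - r) *v u r))" .
qed

lemma cont_mat:
  fixes f :: "real \<Rightarrow> real^'n^'m"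
  assumes "\<And>v. continuous_on S (\<lambda>\<tau>. f \<tau> *v v)"
  shows "continuous_on S f"
proof -
  have e: "f = (\<lambda>\<tau>. \<chi> i. \<chi> j. (f \<tau> *v axis j 1) $ i)"
    by (simp add: vec_eq_iff matrix_vector_mult_basis column_def)
  show ?thesis
    by (subst e) (intro continuous_on_vec_lambda continuous_on_component assms)
qed

lemma M_cont_v: "continuous_on S (\<lambda>\<tau>. mexp (\<tau> *\<^sub>R A) *v v)"
  using M_deriv_vec[of A v] by (metis continuous_at_imp_continuous_on has_vector_derivative_continuous)

lemma AM_cont: "continuous_on UNIV (\<lambda>\<tau>. A ** mexp (\<tau> *\<^sub>R A))"
proof (rule cont_mat)
  fix v
  have e: "(\<lambda>\<tau>. (A ** mexp (\<tau> *\<^sub>R A)) *v v) = (\<lambda>\<tau>. A *v (mexp (\<tau> *\<^sub>R A) *v v))"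
    by (simp add: matrix_vector_mul_assoc)
  show "continuous_on UNIV (\<lambda>\<tau>. (A ** mexp (\<tau> *\<^sub>R A)) *v v)"
    unfolding e
    by (rule continuous_on_compose2[OF matrix_vector_mult_linear_continuous_on[of UNIV A] M_cont_v]) auto
qed

lemma M_cont: "continuous_on UNIV (\<lambda>\<tau>. mexp (\<tau> *\<^sub>R A))"
  by (rule cont_mat) (rule M_cont_v)

lemma M_shift_deriv:
  "((\<lambda>s. mexp ((s - r) *\<^sub>R A) *v v) has_vector_derivative (A ** mexp ((s - r) *\<^sub>R A)) *v v) (at s within S)"
proof -
  have 1: "((\<lambda>s. s - r) has_vector_derivative 1) (at s within S)"
    by (auto intro!: derivative_eq_intros)
  have 2: "((\<lambda>\<tau>. mexp (\<tau> *\<^sub>R A) *v v) has_vector_derivative A *v (mexp ((s - r) *\<^sub>R A) *v v)) (at (s - r) within (\<lambda>s. s - r) ` S)"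
    by (rule M_deriv_vec)
  from vector_diff_chain_within[OF 1 2] show ?thesis
    by (simp add: o_def matrix_vector_mul_assoc)
qed

lemma inner_ftc:
  assumes "r \<le> t"
  shows "((\<lambda>s. (A ** mexp ((s - r) *\<^sub>R A)) *v v) has_integral (mexp ((t - r) *\<^sub>R A) *v v - v)) {r..t}"
proof -
  have "((\<lambda>s. (A ** mexp ((s - r) *\<^sub>R A)) *v v) has_integral (mexp ((t - r) *\<^sub>R A) *v v - mexp ((r - r) *\<^sub>R A) *v v)) {r..t}"
    by (rule fundamental_theorem_of_calculus[OF assms M_shift_deriv])
  then show ?thesis using M0[of A] by simp
qed

lemma exist_sol:
  fixes A :: "real^'n^'n" and B :: "real^'m^'n" and E :: "real^'p^'n" and w :: "real \<Rightarrow> real^'m"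
  assumes w: "integrable (lebesgue_on {0..T}) w"
  shows "solves_on A B E w z0 x0 T (\<lambda>t. if t \<in> {0..T} then mexp (t *\<^sub>R A) *v x0
            + integral {0..t} (\<lambda>s. mexp ((t - s) *\<^sub>R A) *v (B *v w s))
            + (t *\<^sub>R Psi_mat (t *\<^sub>R A)) *v (E *v z0) else 0)"
  unfolding solves_on_def
proof (intro ballI)
  fix t assume t: "t \<in> {0..T}"
  define u where "u s = B *v w s" for s
  define conv where "conv s = integral {0..s} (\<lambda>r. mexp ((s - r) *\<^sub>R A) *v u r)" for s
  define Q where "Q s = s *\<^sub>R Psi_mat (s *\<^sub>R A)" for s
  define Ez where "Ez = E *v z0"
  have t0: "0 \<le> t" using t by simp
  have uT: "u absolutely_integrable_on {0..T}"
  proof -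
    have "w absolutely_integrable_on {0..T}" using w by (simp add: set_integrable_def integrable_restrict_space)
    then have "((*v) B \<circ> w) absolutely_integrable_on {0..T}" by (rule absolutely_integrable_linear) simp
    then show ?thesis by (simp add: u_def[abs_def] o_def)
  qed
  have ut: "u absolutely_integrable_on {0..t}" by (rule set_integrable_subset[OF uT]) (use t in auto)
  have ut_int: "u integrable_on {0..t}" by (rule set_lebesgue_integral_eq_integral(1)[OF ut])
  have P1: "((\<lambda>s. A *v (mexp (s *\<^sub>R A) *v x0)) has_integral (mexp (t *\<^sub>R A) *v x0 - x0)) {0..t}"
    using fundamental_theorem_of_calculus[OF t0 M_deriv_vec, of A x0] M0[of A] by simp
  have P2: "((\<lambda>s. A *v (Q s *v Ez) + Ez) has_integral (Q t *v Ez)) {0..t}"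
  proof -
    have "((\<lambda>s. mexp (s *\<^sub>R A) *v Ez) has_integral (Q t *v Ez - Q 0 *v Ez)) {0..t}"
      unfolding Q_def by (rule fundamental_theorem_of_calculus[OF t0 Q_deriv_vec])
    moreover have "mexp (s *\<^sub>R A) *v Ez = A *v (Q s *v Ez) + Ez" for s
      unfolding Q_def by (subst M_AQ) (simp add: matrix_vector_mult_add_rdistrib matrix_vector_mul_assoc)
    moreover have "Q 0 = 0" by (simp add: Q_def)
    ultimately show ?thesis by simp
  qed
  define K where "K \<tau> = A ** mexp (\<tau> *\<^sub>R A)" for \<tau>
  have Kc: "continuous_on UNIV K" unfolding K_def by (rule AM_cont)
  note fub = fubini_tri[OF ut Kc t0]
  have absM: "(\<lambda>r. mexp ((s - r) *\<^sub>R A) *v u r) absolutely_integrable_on {0..s}" if "s \<in> {0..t}" for s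
  proof (rule absint_mv)
    show "u absolutely_integrable_on {0..s}" by (rule set_integrable_subset[OF ut]) (use that in auto)
    show "continuous_on {0..s} (\<lambda>r. mexp ((s - r) *\<^sub>R A))"
      by (intro continuous_on_compose2[OF M_cont] continuous_intros) auto
  qed
  have e1: "A *v conv s = integral {0..s} (\<lambda>r. K (s - r) *v u r)" if "s \<in> {0..t}" for s
  proof -
    have "integral {0..s} ((*v) A \<circ> (\<lambda>r. mexp ((s - r) *\<^sub>R A) *v u r)) = A *v conv s"
      unfolding conv_def
      by (rule integral_linear[OF set_lebesgue_integral_eq_integral(1)[OF absM[OF that]] matrix_vector_mul_bounded_linear])
    then show ?thesis by (simp add: K_def o_def matrix_vector_mul_assoc)
  qed
  have i1: "(\<lambda>s. A *v conv s) integrable_on {0..t}"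
  proof -
    have "(\<lambda>s. A *v conv s) integrable_on {0..t} \<longleftrightarrow> (\<lambda>s. integral {0..s} (\<lambda>r. K (s - r) *v u r)) integrable_on {0..t}"
      by (rule integrable_cong) (rule e1)
    then show ?thesis using fub(1) by simp
  qed
  have "integral {0..t} (\<lambda>s. A *v conv s) = integral {0..t} (\<lambda>s. integral {0..s} (\<lambda>r. K (s - r) *v u r))"
    by (rule integral_cong) (use e1 in auto)
  also have "\<dots> = integral {0..t} (\<lambda>r. integral {r..t} (\<lambda>s. K (s - r) *v u r))"
    by (rule fub(3))
  also have "\<dots> = integral {0..t} (\<lambda>r. mexp ((t - r) *\<^sub>R A) *v u r - u r)"
  proof (rule integral_cong)
    fix r assume "r \<in> {0..t}"
    then show "integral {r..t} (\<lambda>s. K (s - r) *v u r) = mexp ((t - r) *\<^sub>R A) *v u r - u r"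
      unfolding K_def by (intro integral_unique inner_ftc) auto
  qed
  also have "\<dots> = conv t - integral {0..t} u"
    unfolding conv_def
    by (rule integral_diff[OF set_lebesgue_integral_eq_integral(1)[OF absM] ut_int]) (use t0 in auto)
  finally have iA: "integral {0..t} (\<lambda>s. A *v conv s) = conv t - integral {0..t} u" .
  have P3: "((\<lambda>s. A *v conv s + u s) has_integral conv t) {0..t}"
    using has_integral_add[OF integrable_integral[OF i1] integrable_integral[OF ut_int]] iA by simp
  have "((\<lambda>s. A *v (mexp (s *\<^sub>R A) *v x0) + (A *v (Q s *v Ez) + Ez) + (A *v conv s + u s)) has_integral
        ((mexp (t *\<^sub>R A) *v x0 - x0) + Q t *v Ez + conv t)) {0..t}"
    by (intro has_integral_add P1 P2 P3)
  then have H: "((\<lambda>s. A *v (mexp (s *\<^sub>R A) *v x0) + (A *v (Q s *v Ez) + Ez) + (A *v conv s + u s)) has_integral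
        ((if t \<in> {0..T} then mexp (t *\<^sub>R A) *v x0
            + integral {0..t} (\<lambda>s. mexp ((t - s) *\<^sub>R A) *v (B *v w s))
            + (t *\<^sub>R Psi_mat (t *\<^sub>R A)) *v (E *v z0) else 0) - x0)) {0..t}"
    using t by (simp add: conv_def u_def Q_def Ez_def algebra_simps)
  have "((\<lambda>s. A *v (if s \<in> {0..T} then mexp (s *\<^sub>R A) *v x0
            + integral {0..s} (\<lambda>r. mexp ((s - r) *\<^sub>R A) *v (B *v w r))
            + (s *\<^sub>R Psi_mat (s *\<^sub>R A)) *v (E *v z0) else 0) + B *v w s + E *v z0) has_integral
          ((if t \<in> {0..T} then mexp (t *\<^sub>R A) *v x0
            + integral {0..t} (\<lambda>s. mexp ((t - s) *\<^sub>R A) *v (B *v w s))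
            + (t *\<^sub>R Psi_mat (t *\<^sub>R A)) *v (E *v z0) else 0) - x0)) {0..t}
      \<longleftrightarrow> ((\<lambda>s. A *v (mexp (s *\<^sub>R A) *v x0) + (A *v (Q s *v Ez) + Ez) + (A *v conv s + u s)) has_integral
        ((if t \<in> {0..T} then mexp (t *\<^sub>R A) *v x0
            + integral {0..t} (\<lambda>s. mexp ((t - s) *\<^sub>R A) *v (B *v w s))
            + (t *\<^sub>R Psi_mat (t *\<^sub>R A)) *v (E *v z0) else 0) - x0)) {0..t}"
  proof (rule has_integral_cong)
    fix s assume "s \<in> {0..t}"
    then have "s \<in> {0..T}" using t by auto
    then show "A *v (if s \<in> {0..T} then mexp (s *\<^sub>R A) *v x0
            + integral {0..s} (\<lambda>r. mexp ((s - r) *\<^sub>R A) *v (B *v w r))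
            + (s *\<^sub>R Psi_mat (s *\<^sub>R A)) *v (E *v z0) else 0) + B *v w s + E *v z0 =
        A *v (mexp (s *\<^sub>R A) *v x0) + (A *v (Q s *v Ez) + Ez) + (A *v conv s + u s)"
      by (simp add: conv_def u_def Q_def Ez_def matrix_vector_right_distrib algebra_simps)
  qed
  with H show "((\<lambda>s. A *v (if s \<in> {0..T} then mexp (s *\<^sub>R A) *v x0
            + integral {0..s} (\<lambda>r. mexp ((s - r) *\<^sub>R A) *v (B *v w r))
            + (s *\<^sub>R Psi_mat (s *\<^sub>R A)) *v (E *v z0) else 0) + B *v w s + E *v z0) has_integral
          ((if t \<in> {0..T} then mexp (t *\<^sub>R A) *v x0
            + integral {0..t} (\<lambda>s. mexp ((t - s) *\<^sub>R A) *v (B *v w s))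
            + (t *\<^sub>R Psi_mat (t *\<^sub>R A)) *v (E *v z0) else 0) - x0)) {0..t}" by blast
qed

lemma sol_eq:
  fixes A :: "real^'n^'n" and B :: "real^'m^'n" and E :: "real^'p^'n" and w :: "real \<Rightarrow> real^'m"
  assumes w: "integrable (lebesgue_on {0..T}) w"
  shows "sol A B E w z0 x0 T = (\<lambda>t. if t \<in> {0..T} then mexp (t *\<^sub>R A) *v x0
            + integral {0..t} (\<lambda>s. mexp ((t - s) *\<^sub>R A) *v (B *v w s))
            + (t *\<^sub>R Psi_mat (t *\<^sub>R A)) *v (E *v z0) else 0)" (is "_ = ?X")
  unfolding sol_def
proof (rule the_equality)
  show "solves_on A B E w z0 x0 T ?X \<and> (\<forall>t. t \<notin> {0..T} \<longrightarrow> ?X t = 0)"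
    using exist_sol[OF w] by auto
  fix y assume y: "solves_on A B E w z0 x0 T y \<and> (\<forall>t. t \<notin> {0..T} \<longrightarrow> y t = 0)"
  show "y = ?X"
  proof
    fix t show "y t = ?X t"
    proof (cases "t \<in> {0..T}")
      case True
      then show ?thesis using sol_unique[of A B E w z0 x0 T y ?X t] y exist_sol[OF w] by blast
    next
      case False
      then show ?thesis using y by auto
    qed
  qed
qed

lemma mv_scaleR: "(X::real^'n^'m) *v ((c::real) *\<^sub>R v) = c *\<^sub>R (X *v v)"
  by (simp add: vec_eq_iff matrix_vector_mult_def sum_distrib_left mult.left_commute vector_scaleR_component real_scaleR_def)

lemma shift_image_iff:
  fixes a b :: "'a::ab_group_add"
  shows "a \<in> (\<lambda>\<theta>. b + \<theta>) ` S \<longleftrightarrow> a - b \<in> S"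
proof
  assume "a \<in> (\<lambda>\<theta>. b + \<theta>) ` S"
  then show "a - b \<in> S" by auto
next
  assume "a - b \<in> S"
  moreover have "a = b + (a - b)" by simp
  ultimately show "a \<in> (\<lambda>\<theta>. b + \<theta>) ` S" by blast
qed

lemma inv_image_iff:
  fixes P :: "real^'n^'n"
  assumes "invertible P"
  shows "z \<in> (\<lambda>k. matrix_inv P *v k) ` S \<longleftrightarrow> P *v z \<in> S"
proof -
  have inv: "P ** matrix_inv P = mat 1" "matrix_inv P ** P = mat 1"
    using someI_ex[OF assms[unfolded invertible_def]] by (auto simp: matrix_inv_def)
  show ?thesis
  proof
    assume "z \<in> (\<lambda>k. matrix_inv P *v k) ` S"
    then obtain k where "k \<in> S" "z = matrix_inv P *v k" by auto
    then show "P *v z \<in> S" by (simp add: matrix_vector_mul_assoc inv)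
  next
    assume "P *v z \<in> S"
    moreover have "z = matrix_inv P *v (P *v z)" by (simp add: matrix_vector_mul_assoc inv)
    ultimately show "z \<in> (\<lambda>k. matrix_inv P *v k) ` S" by blast
  qed
qed

theorem theorem1:
  fixes A :: "real^'n^'n" and B :: "real^'m^'n" and C :: "real^'n^'p"
    and E :: "real^'p^'n" and \<Theta> :: "(real^'p) set"
    and w :: "real \<Rightarrow> real^'m" and x0 :: "real^'n" and T :: real
  assumes "T > 0"
    and "convex \<Theta>" and "compact \<Theta>"
    and "integrable (lebesgue_on {0..T}) w"
    and "\<forall>t\<in>{0..T}. invertible (mat 1 - t *\<^sub>R (C ** Psi_mat (t *\<^sub>R A) ** E))"
  shows "stationary_set A B C E \<Theta> w x0 T =
    (\<Inter>t\<in>{0..T}.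
       (\<lambda>k. matrix_inv (mat 1 - t *\<^sub>R (C ** Psi_mat (t *\<^sub>R A) ** E)) *v k) `
         ((\<lambda>\<theta>. C *v (mexp (t *\<^sub>R A) *v x0
                      + integral {0..t} (\<lambda>s. mexp ((t - s) *\<^sub>R A) *v (B *v w s))) + \<theta>) ` \<Theta>))"
proof -
  have key: "z0 \<in> (\<lambda>\<theta>. C *v sol A B E w z0 x0 T t + \<theta>) ` \<Theta> \<longleftrightarrow>
     z0 \<in> (\<lambda>k. matrix_inv (mat 1 - t *\<^sub>R (C ** Psi_mat (t *\<^sub>R A) ** E)) *v k) `
         ((\<lambda>\<theta>. C *v (mexp (t *\<^sub>R A) *v x0
                      + integral {0..t} (\<lambda>s. mexp ((t - s) *\<^sub>R A) *v (B *v w s))) + \<theta>) ` \<Theta>)"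
    if t: "t \<in> {0..T}" for z0 t
  proof -
    define xs where "xs = mexp (t *\<^sub>R A) *v x0 + integral {0..t} (\<lambda>s. mexp ((t - s) *\<^sub>R A) *v (B *v w s))"
    define P where "P = mat 1 - t *\<^sub>R (C ** Psi_mat (t *\<^sub>R A) ** E)"
    have solt: "sol A B E w z0 x0 T t = xs + (t *\<^sub>R Psi_mat (t *\<^sub>R A)) *v (E *v z0)"
      using sol_eq[OF assms(4), of A B E z0 x0] t by (simp add: xs_def)
    have Pz: "P *v z0 = z0 - C *v ((t *\<^sub>R Psi_mat (t *\<^sub>R A)) *v (E *v z0))"
      by (simp add: P_def matrix_vector_mult_diff_rdistrib scaleR_mv matrix_vector_mul_assoc scaleR_mm mm_scaleR mv_scaleR matrix_mul_assoc)
    have "z0 \<in> (\<lambda>k. matrix_inv P *v k) ` ((\<lambda>\<theta>. C *v xs + \<theta>) ` \<Theta>) \<longleftrightarrow> P *v z0 \<in> (\<lambda>\<theta>. C *v xs + \<theta>) ` \<Theta>"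
      by (rule inv_image_iff) (use assms(5) t in \<open>simp add: P_def\<close>)
    also have "\<dots> \<longleftrightarrow> z0 \<in> (\<lambda>\<theta>. C *v sol A B E w z0 x0 T t + \<theta>) ` \<Theta>"
    proof -
      have "P *v z0 \<in> (\<lambda>\<theta>. C *v xs + \<theta>) ` \<Theta> \<longleftrightarrow> P *v z0 - C *v xs \<in> \<Theta>"
        by (rule shift_image_iff)
      moreover have "z0 \<in> (\<lambda>\<theta>. C *v sol A B E w z0 x0 T t + \<theta>) ` \<Theta> \<longleftrightarrow> z0 - C *v sol A B E w z0 x0 T t \<in> \<Theta>"
        by (rule shift_image_iff)
      moreover have "P *v z0 - C *v xs = z0 - C *v sol A B E w z0 x0 T t"
        by (simp add: Pz solt matrix_vector_right_distrib algebra_simps)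
      ultimately show ?thesis by simp
    qed
    finally show ?thesis by (simp add: P_def xs_def)
  qed
  show ?thesis
    unfolding stationary_set_def using key by blast
qed

end
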